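(* Let $b\ge0$, let $\nu_1,\nu_2>-1$ with $\nu_1-\nu_2=2\ell$ for some positive integer $\ell$, and let $0<a_1\le a_2$. Then the function $$\mu\mapsto\frac{Q_{\mu,\nu_1}(a_1,b)}{Q_{\mu,\nu_2}(a_2,b)}$$ is unimodal on $(0,\infty)$.
   Context: The Nuttall $Q$-function is $Q_{\mu,\nu}(a,b)=\int_b^\infty x^{\mu}e^{-(x^2+a^2)/2}I_\nu(ax)\,dx$ for $a>0$, $b\ge0$, $\nu>-1$, $\mu>0$, where $I_\nu$ is the modified Bessel function of the first kind. A function is unimodal if it changes its direction of monotonicity at most once (monotone functions included). *)

theory Defs
  imports "HOL-Analysis.Analysis"
begin

definition bessel_I :: "real \<Rightarrow> real \<Rightarrow> real" where
  "bessel_I nu x = (\<Sum>k. (x / 2) powr (2 * real k + nu) / (fact k * Gamma (real k + nu + 1)))"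

definition nuttall_Q :: "real \<Rightarrow> real \<Rightarrow> real \<Rightarrow> real \<Rightarrow> real" where
  "nuttall_Q mu nu a b =
     (LINT x:{b..}|lborel. x powr mu * exp (- (x\<^sup>2 + a\<^sup>2) / 2) * bessel_I nu (a * x))"

text \<open>Unimodal on S: changes direction of monotonicity at most once
  (monotone functions included, via a turning point c outside S).\<close>
definition unimodal_on :: "real set \<Rightarrow> (real \<Rightarrow> real) \<Rightarrow> bool" where
  "unimodal_on S f \<longleftrightarrow> (\<exists>c.
     (mono_on (S \<inter> {..c}) f \<and> antimono_on (S \<inter> {c..}) f) \<or>
     (antimono_on (S \<inter> {..c}) f \<and> mono_on (S \<inter> {c..}) f))"

end

theory Submission
  imports Defs "HOL-Analysis.Analysis"
begin


lemma poch_lower: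
  fixes nu :: real assumes "nu > -1"
  shows "pochhammer (nu+1) k \<ge> (min 1 (nu+1) / 2)^k * fact k"
proof (induction k)
  case 0 then show ?case by simp
next
  case (Suc k)
  define d where "d = min 1 (nu+1)"
  have d: "0 < d" "d \<le> 1" "d \<le> nu + 1" using assms by (auto simp: d_def)
  have f: "nu + 1 + real k \<ge> d/2 * (real k + 1)"
  proof (cases k)
    case 0 then show ?thesis using d by simp
  next
    case (Suc j)
    have "d/2 * (real k + 1) \<le> 1/2 * (real k + 1)" using d by (intro mult_right_mono) auto
    also have "\<dots> \<le> real k" using Suc by simp
    finally show ?thesis using assms by simp
  qed
  have "(d/2)^Suc k * fact (Suc k) = ((d/2)^k * fact k) * (d/2 * (real k + 1))"
    by (simp add: algebra_simps)
  also have "\<dots> \<le> pochhammer (nu+1) k * (nu + 1 + real k)"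
    using Suc.IH f d assms by (intro mult_mono) (auto simp: d_def intro!: less_imp_le[OF pochhammer_pos])
  also have "\<dots> = pochhammer (nu+1) (Suc k)" by (simp add: pochhammer_Suc)
  finally show ?case by (simp add: d_def)
qed

lemma Gamma_lower:
  fixes nu :: real assumes "nu > -1"
  shows "Gamma (real k + nu + 1) \<ge> Gamma (nu+1) * ((min 1 (nu+1) / 2)^k * fact k)"
proof -
  have nz: "nu + 1 \<notin> \<int>\<^sub>\<le>\<^sub>0" using assms by (auto elim!: nonpos_Ints_cases)
  have g: "Gamma (nu+1) > 0" using assms by simp
  have "Gamma (real k + nu + 1) = pochhammer (nu+1) k * Gamma (nu+1)"
    using pochhammer_Gamma[OF nz, of k] g by (simp add: field_simps add_ac)
  then show ?thesis using poch_lower[OF assms, of k] assms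
    by (simp add: mult.commute mult_left_mono)
qed

lemma pow_div_fact_le_exp:
  fixes x :: real assumes "x \<ge> 0" shows "x^n / fact n \<le> exp x"
proof -
  have s: "(\<lambda>n. x^n /\<^sub>R fact n) sums exp x" by (rule exp_converges)
  have "x^n / fact n = (\<Sum>i\<in>{n}. x^i /\<^sub>R fact i)" by (simp add: divide_inverse mult.commute)
  also have "\<dots> \<le> exp x"
    using sums_unique[OF s] summable_exp_generic[of x] assms
    by (metis (no_types, lifting) divide_nonneg_nonneg finite.emptyI finite.insertI fact_ge_zero real_scaleR_def sum_le_suminf  zero_le_power divide_inverse mult.commute)
  finally show ?thesis .
qed

definition bc :: "real \<Rightarrow> real \<Rightarrow> nat \<Rightarrow> real" where
  "bc a nu k = (a/2) powr (2*real k + nu) / (fact k * Gamma (real k + nu + 1))"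

definition bS :: "real \<Rightarrow> real \<Rightarrow> real \<Rightarrow> real" where
  "bS a nu y = (\<Sum>k. bc a nu k * y^k)"

definition bK :: "real \<Rightarrow> real \<Rightarrow> real" where
  "bK a nu = (a/2)^2 * (2 / min 1 (nu+1))"

definition bC :: "real \<Rightarrow> real \<Rightarrow> real" where
  "bC a nu = (a/2) powr nu / Gamma (nu+1)"

lemma bc_pos: assumes "a > 0" "nu > -1" shows "bc a nu k > 0"
  using assms by (auto simp: bc_def intro!: divide_pos_pos Gamma_real_pos)

lemma bc_bound:
  assumes "a > 0" "nu > -1"
  shows "bc a nu k \<le> bC a nu * (bK a nu)^k / (fact k)^2"
proof -
  define d where "d = min 1 (nu+1)"
  have d: "d > 0" using assms by (simp add: d_def)
  have g: "Gamma (nu+1) > 0" using assms by simp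
  have G: "Gamma (real k + nu + 1) \<ge> Gamma (nu+1) * ((d/2)^k * fact k)"
    using Gamma_lower[OF assms(2), of k] by (simp add: d_def)
  have p1: "(a/2) powr (2*real k + nu) = (a/2) powr (real (2*k)) * (a/2) powr nu"
    by (simp add: powr_add)
  have p2: "(a/2) powr (real (2*k)) = ((a/2)^2)^k"
    using assms by (subst powr_realpow) (auto simp: power_mult)
  have p: "(a/2) powr (2*real k + nu) = (a/2) powr nu * ((a/2)^2)^k"
    using p1 p2 by simp
  have pos: "0 < Gamma (nu+1) * ((d/2)^k * fact k)" using g d by simp
  have "bc a nu k = (a/2) powr nu * ((a/2)^2)^k / (fact k * Gamma (real k + nu + 1))"
    by (simp add: bc_def p)
  also have "\<dots> \<le> (a/2) powr nu * ((a/2)^2)^k / (fact k * (Gamma (nu+1) * ((d/2)^k * fact k)))"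
    using G pos assms d by (intro divide_left_mono mult_left_mono mult_pos_pos) auto
  also have "\<dots> = ((a/2) powr nu / Gamma (nu+1)) * (((a/2)^2)^k * (2/d)^k) / (fact k)^2"
    using d g by (simp add: power_divide power2_eq_square mult_ac)
  also have "\<dots> = bC a nu * (bK a nu)^k / (fact k)^2"
    by (simp add: bC_def bK_def d_def[symmetric] power_mult_distrib[symmetric] times_divide_eq_right[symmetric] del: times_divide_eq_right)
  finally show ?thesis .
qed

lemma bc_bound2:
  assumes "a > 0" "nu > -1" "y \<ge> 0"
  shows "bc a nu k * y^k \<le> bC a nu * exp (4 * bK a nu) * ((y/4)^k / fact k)"
proof -
  have K: "bK a nu > 0" using assms by (simp add: bK_def)
  have C: "bC a nu > 0" using assms by (simp add: bC_def)
  have "bc a nu k * y^k \<le> bC a nu * (bK a nu)^k / (fact k)^2 * y^k"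
    using bc_bound[OF assms(1,2)] assms(3) by (intro mult_right_mono) auto
  also have "\<dots> = bC a nu * (((4 * bK a nu)^k / fact k) * ((y/4)^k / fact k))"
    by (simp add: power_mult_distrib power2_eq_square power_divide field_simps)
  also have "\<dots> \<le> bC a nu * (exp (4 * bK a nu) * ((y/4)^k / fact k))"
    using K C assms by (intro mult_left_mono mult_right_mono pow_div_fact_le_exp) auto
  finally show ?thesis by (simp add: mult_ac)
qed

lemma bc_summable:
  assumes "a > 0" "nu > -1" "y \<ge> 0"
  shows "summable (\<lambda>k. bc a nu k * y^k)"
proof (rule summable_comparison_test')
  have eq: "(\<lambda>k. (y/4)^k / fact k) = (\<lambda>k. inverse (fact k) * (y/4)^k)"
    by (rule ext) (rule divide_inverse_commute)
  have "summable (\<lambda>k. (y/4)^k / fact k)" unfolding eq by (rule summable_exp)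
  then show "summable (\<lambda>k. bC a nu * exp (4 * bK a nu) * ((y/4)^k / fact k))"
    by (rule summable_mult)
  fix k :: nat
  have "0 \<le> bc a nu k * y^k" using bc_pos[OF assms(1,2), of k] assms(3) by simp
  then show "norm (bc a nu k * y^k) \<le> bC a nu * exp (4 * bK a nu) * ((y/4)^k / fact k)"
    using bc_bound2[OF assms, of k] by simp
qed

lemma bS_pos: assumes "a > 0" "nu > -1" "y \<ge> 0" shows "bS a nu y > 0"
  unfolding bS_def
proof (rule suminf_pos2[where i=0])
  show "summable (\<lambda>k. bc a nu k * y^k)" by (rule bc_summable[OF assms])
  show "0 \<le> bc a nu n * y^n" for n using bc_pos[OF assms(1,2), of n] assms(3) by simp
  show "0 < bc a nu 0 * y^0" using bc_pos[OF assms(1,2), of 0] by simp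
qed

lemma bS_bound:
  assumes "a > 0" "nu > -1" "y \<ge> 0"
  shows "bS a nu y \<le> bC a nu * exp (4 * bK a nu) * exp (y/4)"
proof -
  have s: "(\<lambda>k. (y/4)^k / fact k) sums exp (y/4)"
  proof -
    have "(\<lambda>k. (y/4)^k /\<^sub>R fact k) = (\<lambda>k. (y/4)^k / fact k)"
      by (rule ext) (simp only: real_scaleR_def divide_inverse_commute)
    then show ?thesis using exp_converges[of "y/4"] by simp
  qed
  have "bS a nu y \<le> (\<Sum>k. bC a nu * exp (4 * bK a nu) * ((y/4)^k / fact k))"
    unfolding bS_def using bc_summable[OF assms] bc_bound2[OF assms] s
    by (intro suminf_le summable_mult) (auto simp: sums_iff)
  also have "\<dots> = bC a nu * exp (4 * bK a nu) * exp (y/4)"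
    using sums_unique[OF sums_mult[OF s, of "bC a nu * exp (4 * bK a nu)"]] by simp
  finally show ?thesis .
qed

lemma bessel_eq:
  assumes "a > 0" "x > 0" "nu > -1"
  shows "bessel_I nu (a*x) = x powr nu * bS a nu (x^2)"
proof -
  have t: "(a*x/2) powr (2*real k + nu) / (fact k * Gamma (real k + nu + 1)) = x powr nu * (bc a nu k * (x^2)^k)" for k
  proof -
    have e1: "a*x/2 = (a/2) * x" by simp
    have e2: "x powr (2*real k + nu) = x powr (real (2*k)) * x powr nu" by (simp add: powr_add)
    have e3: "x powr (real (2*k)) = (x^2)^k" using assms(2) by (subst powr_realpow) (auto simp: power_mult)
    have "(a*x/2) powr (2*real k + nu) = (a/2) powr (2*real k + nu) * x powr (2*real k + nu)"
      using powr_mult[of "a/2" x "2*real k + nu"] assms by simp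
    also have "\<dots> = (a/2) powr (2*real k + nu) * (x powr nu * (x^2)^k)"
      unfolding e2 e3 by simp
    finally have "(a*x/2) powr (2*real k + nu) = (a/2) powr (2*real k + nu) * (x powr nu * (x^2)^k)" .
    then show ?thesis by (simp add: bc_def)
  qed
  show ?thesis unfolding bessel_I_def bS_def t
    using bc_summable[OF assms(1,3), of "x^2"] by (subst suminf_mult[symmetric]) auto
qed



lemma set_integral_pos:
  fixes f :: "real \<Rightarrow> real"
  assumes int: "set_integrable lborel {b..} f"
    and pos: "\<And>x. x > b \<Longrightarrow> f x > 0" and nn: "\<And>x. x \<ge> b \<Longrightarrow> f x \<ge> 0"
  shows "(LINT x:{b..}|lborel. f x) > 0"
proof -
  let ?g = "\<lambda>x. indicator {b..} x *\<^sub>R f x"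
  have ig: "integrable lborel ?g" using int by (simp add: set_integrable_def)
  have g0: "AE x in lborel. 0 \<le> ?g x" using nn by (auto simp: indicator_def)
  have ge: "integral\<^sup>L lborel ?g \<ge> 0" using g0 by (rule integral_nonneg_AE)
  have "integral\<^sup>L lborel ?g \<noteq> 0"
  proof
    assume "integral\<^sup>L lborel ?g = 0"
    then have "AE x in lborel. ?g x = 0" using integral_nonneg_eq_0_iff_AE[OF ig g0] by simp
    then obtain N where N: "{x. ?g x \<noteq> 0} \<subseteq> N" "N \<in> sets lborel" "emeasure lborel N = 0"
      by (auto elim!: AE_E)
    have "{b<..<b+1} \<subseteq> N" using N(1) pos by (force simp: indicator_def)
    then have "emeasure lborel {b<..<b+1} \<le> emeasure lborel N" by (intro emeasure_mono N(2))
    then show False using N(3) by simp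
  qed
  then show ?thesis using ge by (simp add: set_lebesgue_integral_def)
qed

definition nq :: "real \<Rightarrow> real \<Rightarrow> real \<Rightarrow> real \<Rightarrow> real" where
  "nq mu nu a x = x powr mu * exp (- (x\<^sup>2 + a\<^sup>2) / 2) * bessel_I nu (a * x)"

lemma nq_measurable: "nq mu nu a \<in> borel_measurable lborel"
  unfolding nq_def bessel_I_def by measurable

lemma nq_pos:
  assumes "a > 0" "nu > -1" "x > 0" shows "nq mu nu a x > 0"
  using assms bS_pos[OF assms(1,2), of "x^2"] by (simp add: nq_def bessel_eq)

lemma nq_nonneg:
  assumes "a > 0" "nu > -1" "x \<ge> 0" "mu > 0" shows "nq mu nu a x \<ge> 0"
proof (cases "x = 0")
  case True then show ?thesis using assms by (simp add: nq_def)
next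
  case False then show ?thesis using nq_pos[of a nu x mu] assms by simp
qed

lemma exp_quarter: "exp (- (x^2) / 4) \<le> exp 1 * (1 / exp (x::real))"
proof -
  have "- (x^2) / 4 \<le> 1 - x" using sum_squares_ge_zero[of "x/2 - 1" 0]
    by (simp add: power2_eq_square field_simps)
  then have "exp (- (x^2) / 4) \<le> exp (1 - x)" by simp
  also have "\<dots> = exp 1 * (1 / exp x)" by (simp add: exp_diff)
  finally show ?thesis .
qed

lemma nq_bound:
  assumes "a > 0" "nu > -1" "x > 0"
  shows "nq mu nu a x \<le> (bC a nu * exp (4 * bK a nu) * exp 1) * (x powr (mu + nu) / exp x)"
proof -
  have C: "bC a nu * exp (4 * bK a nu) \<ge> 0" using assms by (simp add: bC_def)
  have S: "bS a nu (x^2) \<le> bC a nu * exp (4 * bK a nu) * exp (x^2/4)"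
    using bS_bound[OF assms(1,2), of "x^2"] by simp
  have e: "exp (- (x\<^sup>2) / 2) * exp (x^2/4) = exp (- (x\<^sup>2) / 4)"
    by (subst exp_add[symmetric]) simp
  have "nq mu nu a x = x powr (mu + nu) * exp (- (x\<^sup>2 + a\<^sup>2) / 2) * bS a nu (x^2)"
    using assms by (simp add: nq_def bessel_eq powr_add)
  also have "\<dots> \<le> x powr (mu + nu) * exp (- (x\<^sup>2) / 2) * (bC a nu * exp (4 * bK a nu) * exp (x^2/4))"
    using assms S bS_pos[OF assms(1,2), of "x^2"]
    by (intro mult_mono mult_left_mono) auto
  also have "\<dots> = (bC a nu * exp (4 * bK a nu)) * x powr (mu + nu) * (exp (- (x\<^sup>2) / 2) * exp (x^2/4))"
    by (simp add: mult_ac)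
  also have "\<dots> = (bC a nu * exp (4 * bK a nu)) * x powr (mu + nu) * exp (- (x\<^sup>2) / 4)"
    using e by simp
  also have "\<dots> \<le> (bC a nu * exp (4 * bK a nu)) * x powr (mu + nu) * (exp 1 * (1 / exp x))"
    using C exp_quarter[of x] by (intro mult_left_mono) auto
  also have "\<dots> = (bC a nu * exp (4 * bK a nu) * exp 1) * (x powr (mu + nu) / exp x)"
    by simp
  finally show ?thesis .
qed

lemma gamma_integrand_integrable:
  assumes "s > (0::real)"
  shows "set_integrable lborel {0..} (\<lambda>t. t powr (s - 1) / exp t)"
proof -
  have "(\<lambda>t. t powr (s - 1) / exp t) integrable_on {0..}"
    using Gamma_integral_real[OF assms] by blast
  then have "(\<lambda>t. t powr (s - 1) / exp t) absolutely_integrable_on {0..}"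
    by (subst absolutely_integrable_on_iff_nonneg) auto
  then show ?thesis unfolding set_integrable_def
    by (subst (asm) integrable_completion) auto
qed

lemma nq_integrable:
  assumes "a > 0" "nu > -1" "mu > 0" "b \<ge> 0"
  shows "set_integrable lborel {b..} (nq mu nu a)"
proof -
  define M where "M = bC a nu * exp (4 * bK a nu) * exp 1"
  have M: "M \<ge> 0" using assms by (simp add: M_def bC_def)
  have G: "set_integrable lborel {0..} (\<lambda>t. t powr ((mu + nu + 1) - 1) / exp t)"
    using assms by (intro gamma_integrand_integrable) auto
  have G': "integrable lborel (\<lambda>x. indicator {0..} x *\<^sub>R (M * (x powr (mu + nu) / exp x)))"
    using integrable_mult_right[OF G[unfolded set_integrable_def], of M]
    by (simp add: mult_ac)
  show ?thesis unfolding set_integrable_def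
  proof (rule Bochner_Integration.integrable_bound[OF G' _ AE_I2])
    show "(\<lambda>x. indicator {b..} x *\<^sub>R nq mu nu a x) \<in> borel_measurable lborel"
      using nq_measurable by measurable
    fix x :: real
    show "norm (indicator {b..} x *\<^sub>R nq mu nu a x) \<le> norm (indicator {0..} x *\<^sub>R (M * (x powr (mu + nu) / exp x)))"
    proof (cases "x \<ge> b")
      case True
      show ?thesis
      proof (cases "x = 0")
        case True then show ?thesis using assms by (simp add: nq_def)
      next
        case False
        then have x: "x > 0" using True assms by simp
        have "nq mu nu a x \<le> M * (x powr (mu + nu) / exp x)"
          using nq_bound[OF assms(1,2) x, of mu] by (simp add: M_def)
        then show ?thesis using x True nq_pos[OF assms(1,2) x, of mu] M by (simp add: abs_mult)
      qed
    qed simp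
  qed
qed



lemma exp_lin_convex:
  fixes c u v q :: real
  assumes "0 \<le> q" "q \<le> 1"
  shows "exp (c * ((1 - q) * u + q * v)) \<le> (1 - q) * exp (c* u) + q * exp (c* v)"
  using convex_onD[OF exp_convex, of q "c*u" "c * v"] assms by (simp add: algebra_simps)

lemma two_exp_convex:
  fixes al be c1 c3 u v q :: real
  assumes "0 \<le> q" "q \<le> 1" "al \<ge> 0" "be \<ge> 0"
  shows "al * exp (c1 * ((1 - q) * u + q * v)) + be * exp (c3 * ((1 - q) * u + q * v))
     \<le> (1 - q) * (al * exp (c1* u) + be * exp (c3* u)) + q * (al * exp (c1* v) + be * exp (c3* v))"
proof -
  have "al * exp (c1 * ((1 - q) * u + q * v)) \<le> al * ((1 - q) * exp (c1* u) + q * exp (c1* v))"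
    using assms exp_lin_convex by (intro mult_left_mono) auto
  moreover have "be * exp (c3 * ((1 - q) * u + q * v)) \<le> be * ((1 - q) * exp (c3* u) + q * exp (c3* v))"
    using assms exp_lin_convex by (intro mult_left_mono) auto
  ultimately show ?thesis by (simp add: algebra_simps)
qed

lemma kernel_exists:
  fixes s1 s2 s3 t1 t2 :: real
  assumes "s1 < s2" "s2 < s3" "t1 < t2"
  obtains al be where "al > 0" "be > 0"
    "\<And>t. t \<le> t1 \<or> t2 \<le> t \<Longrightarrow> exp (s2*t) \<le> al * exp (s1*t) + be * exp (s3*t)"
    "\<And>t. t1 \<le> t \<Longrightarrow> t \<le> t2 \<Longrightarrow> al * exp (s1*t) + be * exp (s3*t) \<le> exp (s2*t)"
proof -
  define c1 where "c1 = s1 - s2"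
  define c3 where "c3 = s3 - s2"
  have c: "c1 < 0" "c3 > 0" using assms by (auto simp: c1_def c3_def)
  define P1 where "P1 = exp (c1*t1)"
  define P2 where "P2 = exp (c1*t2)"
  define Q1 where "Q1 = exp (c3*t1)"
  define Q2 where "Q2 = exp (c3*t2)"
  have PQ: "P2 < P1" "Q1 < Q2" "P2 > 0" "Q1 > 0"
    using c assms by (auto simp: P1_def P2_def Q1_def Q2_def mult_less_cancel_left)
  define D where "D = P1*Q2 - P2*Q1"
  have "P2*Q1 < P1*Q2" using PQ by (intro mult_strict_mono) auto
  then have D: "D > 0" by (simp add: D_def)
  define al where "al = (Q2 - Q1)/D"
  define be where "be = (P1 - P2)/D"
  have ab: "al > 0" "be > 0" using PQ D by (auto simp: al_def be_def)
  define f where "f = (\<lambda>t. al * exp (c1*t) + be * exp (c3*t))"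
  have n1: "(Q2 - Q1) * P1 + (P1 - P2) * Q1 = D" by (simp add: D_def algebra_simps)
  have n2: "(Q2 - Q1) * P2 + (P1 - P2) * Q2 = D" by (simp add: D_def algebra_simps)
  have f1: "f t1 = 1"
  proof -
    have "f t1 = ((Q2 - Q1) * P1 + (P1 - P2) * Q1) / D"
      unfolding f_def al_def be_def P1_def Q1_def by (simp add: add_divide_distrib)
    then show ?thesis using n1 D by simp
  qed
  have f2: "f t2 = 1"
  proof -
    have "f t2 = ((Q2 - Q1) * P2 + (P1 - P2) * Q2) / D"
      unfolding f_def al_def be_def P2_def Q2_def by (simp add: add_divide_distrib)
    then show ?thesis using n2 D by simp
  qed
  have conv: "f ((1 - q) * u + q * v) \<le> (1 - q) * f u + q * f v" if "0 \<le> q" "q \<le> 1" for q u v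
    unfolding f_def using two_exp_convex[OF that, of al be] ab by simp
  have inside: "f t \<le> 1" if "t1 \<le> t" "t \<le> t2" for t
  proof -
    define q where "q = (t - t1)/(t2 - t1)"
    have q: "0 \<le> q" "q \<le> 1" using that assms by (auto simp: q_def field_simps)
    have "q * (t2 - t1) = t - t1" using assms by (simp add: q_def)
    then have "t = (1 - q) * t1 + q * t2" by (simp add: algebra_simps)
    then have "f t \<le> (1 - q) * f t1 + q * f t2" using conv[OF q] by simp
    then show ?thesis using f1 f2 by simp
  qed
  have outside: "f t \<ge> 1" if "t \<le> t1 \<or> t2 \<le> t" for t
  proof (cases "t \<le> t1")
    case True
    show ?thesis
    proof (cases "t = t1")
      case True then show ?thesis using f1 by simp
    next
      case False
      then have tl: "t < t1" using \<open>t \<le> t1\<close> by simp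
      define q where "q = (t1 - t)/(t2 - t)"
      have q: "0 \<le> q" "q < 1" using tl assms by (auto simp: q_def field_simps)
      have "q * (t2 - t) = t1 - t" using tl assms by (simp add: q_def)
      then have "t1 = (1 - q) * t + q * t2" by (simp add: algebra_simps)
      then have "1 \<le> (1 - q) * f t + q * 1" using conv[of q t t2] q f1 f2 by simp
      then have "(1 - q) * 1 \<le> (1 - q) * f t" by (simp add: algebra_simps)
      then show ?thesis using q by simp
    qed
  next
    case False
    then have t2t: "t2 \<le> t" using that by simp
    show ?thesis
    proof (cases "t = t2")
      case True then show ?thesis using f2 by simp
    next
      case False
      then have tg: "t2 < t" using t2t by simp
      define q where "q = (t2 - t1)/(t - t1)"
      have q: "0 < q" "q \<le> 1" using tg assms by (auto simp: q_def field_simps)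
      have "q * (t - t1) = t2 - t1" using tg assms by (simp add: q_def)
      then have "t2 = (1 - q) * t1 + q * t" by (simp add: algebra_simps)
      then have "1 \<le> (1 - q) * 1 + q * f t" using conv[of q t1 t] q f1 f2 by simp
      then have "q * 1 \<le> q * f t" by (simp add: algebra_simps)
      then show ?thesis using q by simp
    qed
  qed
  have e: "al * exp (s1*t) + be * exp (s3*t) = exp (s2*t) * f t" for t
  proof -
    have "exp (s1*t) = exp (s2*t) * exp (c1*t)" "exp (s3*t) = exp (s2*t) * exp (c3*t)"
      by (simp_all add: c1_def c3_def exp_add[symmetric] algebra_simps)
    then show ?thesis by (simp add: f_def algebra_simps)
  qed
  show ?thesis
  proof (rule that[OF ab])
    fix t assume "t \<le> t1 \<or> t2 \<le> t"
    then have "exp (s2*t) * 1 \<le> exp (s2*t) * f t" using outside by (intro mult_left_mono) auto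
    then show "exp (s2*t) \<le> al * exp (s1*t) + be * exp (s3*t)" by (simp add: e)
  next
    fix t assume "t1 \<le> t" "t \<le> t2"
    then have "exp (s2*t) * f t \<le> exp (s2*t) * 1" using inside by (intro mult_left_mono) auto
    then show "al * exp (s1*t) + be * exp (s3*t) \<le> exp (s2*t)" by (simp add: e)
  qed
qed



lemma exp_ln_pow: assumes "y > 0" shows "exp (ln y * real m) = y ^ m"
proof -
  have "y powr (real m) = y^m" using assms by (simp add: powr_realpow)
  then show ?thesis using assms by (simp add: powr_def mult.commute)
qed

lemma discrete_qc:
  fixes w :: "nat \<Rightarrow> real"
  assumes summ: "\<And>y. y > 0 \<Longrightarrow> summable (\<lambda>m. w m * y^m)"
    and conv: "\<And>i j k. i \<le> j \<Longrightarrow> j \<le> k \<Longrightarrow> w i > 0 \<Longrightarrow> w k > 0 \<Longrightarrow> w j > 0"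
    and y: "0 < y1" "y1 < y2" "y2 < y3"
    and pos: "(\<Sum>m. w m * y1^m) > 0" "(\<Sum>m. w m * y3^m) > 0"
  shows "(\<Sum>m. w m * y2^m) > 0"
proof -
  define P where "P = {m. w m > 0}"
  have Pne: "P \<noteq> {}"
  proof
    assume "P = {}"
    then have "\<And>m. w m \<le> 0" by (auto simp: P_def not_less)
    then have "(\<Sum>m. w m * y1^m) \<le> (\<Sum>m::nat. 0::real)" using y
      by (intro suminf_le summ) (auto intro!: mult_nonpos_nonneg)
    then have "(\<Sum>m. w m * y1^m) \<le> 0" by simp
    then show False using pos by simp
  qed
  define m1 where "m1 = (LEAST m. m \<in> P)"
  have m1P: "m1 \<in> P" using Pne unfolding m1_def by (metis LeastI ex_in_conv)
  have below: "w m \<le> 0" if "m < m1" for m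
    using not_less_Least[of m "\<lambda>m. m \<in> P"] that by (auto simp: m1_def P_def)
  show ?thesis
  proof (cases "finite P")
    case True
    define m2 where "m2 = Max P"
    have m2P: "m2 \<in> P" using True Pne by (simp add: m2_def)
    have above: "w m \<le> 0" if "m > m2" for m
      using Max_ge[OF True, of m] that by (force simp: m2_def P_def)
    have inside: "w m \<ge> 0" if "m1 \<le> m" "m \<le> m2" for m
      using conv[OF that] m1P m2P by (auto simp: P_def)
    have m12: "m1 \<le> m2" using True m1P by (simp add: m2_def)
    obtain al be where ab: "al > 0" "be > 0"
      and out: "\<And>t. t \<le> real m1 - 1/2 \<or> real m2 + 1/2 \<le> t \<Longrightarrow> exp (ln y2 * t) \<le> al * exp (ln y1 * t) + be * exp (ln y3 * t)"
      and ins: "\<And>t. real m1 - 1/2 \<le> t \<Longrightarrow> t \<le> real m2 + 1/2 \<Longrightarrow> al * exp (ln y1 * t) + be * exp (ln y3 * t) \<le> exp (ln y2 * t)"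
      using kernel_exists[of "ln y1" "ln y2" "ln y3" "real m1 - 1/2" "real m2 + 1/2"] y m12 by auto
    have tm: "al * (w m * y1^m) + be * (w m * y3^m) \<le> w m * y2^m" for m
    proof (cases "m1 \<le> m \<and> m \<le> m2")
      case True
      then have "al * y1^m + be * y3^m \<le> y2^m"
        using ins[of "real m"] y exp_ln_pow[of y1 m] exp_ln_pow[of y2 m] exp_ln_pow[of y3 m] by auto
      then have "w m * (al * y1^m + be * y3^m) \<le> w m * y2^m"
        using inside True by (intro mult_left_mono) auto
      then show ?thesis by (simp add: algebra_simps)
    next
      case False
      then have "m < m1 \<or> m > m2" by auto
      then have wn: "w m \<le> 0" using below above by auto
      have "real m \<le> real m1 - 1/2 \<or> real m2 + 1/2 \<le> real m" using \<open>m < m1 \<or> m > m2\<close> by auto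
      then have "y2^m \<le> al * y1^m + be * y3^m"
        using out[of "real m"] y exp_ln_pow[of y1 m] exp_ln_pow[of y2 m] exp_ln_pow[of y3 m] by auto
      then have "w m * (al * y1^m + be * y3^m) \<le> w m * y2^m"
        using wn by (intro mult_left_mono_neg) auto
      then show ?thesis by (simp add: algebra_simps)
    qed
    have s1: "summable (\<lambda>m. w m * y1^m)" "summable (\<lambda>m. w m * y2^m)" "summable (\<lambda>m. w m * y3^m)"
      using summ y by auto
    have "al * (\<Sum>m. w m * y1^m) + be * (\<Sum>m. w m * y3^m) = (\<Sum>m. al * (w m * y1^m) + be * (w m * y3^m))"
    proof -
      have "(\<Sum>m. al * (w m * y1^m) + be * (w m * y3^m)) = (\<Sum>m. al * (w m * y1^m)) + (\<Sum>m. be * (w m * y3^m))"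
        by (rule suminf_add[symmetric]) (auto intro: summable_mult s1)
      then show ?thesis using s1 by (simp add: suminf_mult)
    qed
    also have "\<dots> \<le> (\<Sum>m. w m * y2^m)"
      using s1 tm by (intro suminf_le summable_add summable_mult) auto
    finally have "al * (\<Sum>m. w m * y1^m) + be * (\<Sum>m. w m * y3^m) \<le> (\<Sum>m. w m * y2^m)" .
    moreover have "al * (\<Sum>m. w m * y1^m) + be * (\<Sum>m. w m * y3^m) > 0"
      using ab pos by (intro add_pos_pos mult_pos_pos)
    ultimately show ?thesis by simp
  next
    case False
    have upper: "w m \<ge> 0" if "m \<ge> m1" for m
    proof -
      obtain k where "k \<in> P" "k > m" using False
        using infinite_nat_iff_unbounded by blast
      then show ?thesis using conv[OF that, of k] m1P by (auto simp: P_def)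
    qed
    have tm: "w m * y1^m / y1^m1 \<le> w m * y2^m / y2^m1" for m
    proof (cases "m1 \<le> m")
      case True
      have "y1^m / y1^m1 = y1^(m - m1)" "y2^m / y2^m1 = y2^(m - m1)"
        using True y by (simp_all add: power_diff)
      moreover have "y1^(m - m1) \<le> y2^(m - m1)" using y by (intro power_mono) auto
      ultimately have "y1^m / y1^m1 \<le> y2^m / y2^m1" by simp
      then have "w m * (y1^m / y1^m1) \<le> w m * (y2^m / y2^m1)"
        using upper[OF True] by (intro mult_left_mono) auto
      then show ?thesis by simp
    next
      case False
      have "y1^m / y1^m1 = 1 / y1^(m1 - m)" "y2^m / y2^m1 = 1 / y2^(m1 - m)"
      proof -
        have e: "m1 = m + (m1 - m)" using False by simp
        have "y1^m1 = y1^m * y1^(m1 - m)" "y2^m1 = y2^m * y2^(m1 - m)"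
          by (subst e, simp only: power_add)+
        then show "y1^m / y1^m1 = 1 / y1^(m1 - m)" "y2^m / y2^m1 = 1 / y2^(m1 - m)" using y by simp_all
      qed
      moreover have "1 / y2^(m1 - m) \<le> 1 / y1^(m1 - m)" using y
        by (intro divide_left_mono power_mono mult_pos_pos zero_less_power) auto
      ultimately have "y2^m / y2^m1 \<le> y1^m / y1^m1" by simp
      then have "w m * (y1^m / y1^m1) \<le> w m * (y2^m / y2^m1)"
        using below False by (intro mult_left_mono_neg) auto
      then show ?thesis by simp
    qed
    have s1: "summable (\<lambda>m. w m * y1^m)" "summable (\<lambda>m. w m * y2^m)"
      using summ y by auto
    have "(\<Sum>m. w m * y1^m) / y1^m1 = (\<Sum>m. w m * y1^m / y1^m1)"
      using s1 by (simp add: suminf_divide)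
    also have "\<dots> \<le> (\<Sum>m. w m * y2^m / y2^m1)"
      using s1 tm by (intro suminf_le summable_divide) auto
    also have "\<dots> = (\<Sum>m. w m * y2^m) / y2^m1"
      using s1 by (simp add: suminf_divide)
    finally have "(\<Sum>m. w m * y1^m) / y1^m1 \<le> (\<Sum>m. w m * y2^m) / y2^m1" .
    moreover have "(\<Sum>m. w m * y1^m) / y1^m1 > 0" using pos y by simp
    ultimately have "(\<Sum>m. w m * y2^m) / y2^m1 > 0" by simp
    then show ?thesis using y by (simp add: zero_less_divide_iff)
  qed
qed



lemma ratio_step:
  fixes V :: "real \<Rightarrow> real"
  assumes r: "r > 0"
    and i1: "set_integrable lborel {b..} (\<lambda>x. x powr m1 * V x)"
    and i2: "set_integrable lborel {b..} (\<lambda>x. x powr m2 * V x)"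
    and pw: "\<And>x. x \<ge> b \<Longrightarrow> x powr m1 * V x / r powr m1 \<le> x powr m2 * V x / r powr m2"
    and pos: "(LINT x:{b..}|lborel. x powr m1 * V x) > 0"
  shows "(LINT x:{b..}|lborel. x powr m2 * V x) > 0"
proof -
  have "(LINT x:{b..}|lborel. x powr m1 * V x) / r powr m1 = (LINT x:{b..}|lborel. x powr m1 * V x / r powr m1)"
    by simp
  also have "\<dots> \<le> (LINT x:{b..}|lborel. x powr m2 * V x / r powr m2)"
    using i1 i2 pw by (intro set_integral_mono set_integrable_divide) auto
  also have "\<dots> = (LINT x:{b..}|lborel. x powr m2 * V x) / r powr m2" by simp
  finally have "(LINT x:{b..}|lborel. x powr m1 * V x) / r powr m1 \<le> (LINT x:{b..}|lborel. x powr m2 * V x) / r powr m2" .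
  moreover have "(LINT x:{b..}|lborel. x powr m1 * V x) / r powr m1 > 0" using pos r by simp
  ultimately have "(LINT x:{b..}|lborel. x powr m2 * V x) / r powr m2 > 0" by linarith
  then show ?thesis using r by (simp add: zero_less_divide_iff)
qed

lemma cont_qc:
  fixes V :: "real \<Rightarrow> real" and b :: real
  assumes b: "b \<ge> 0"
    and int: "\<And>mu. mu > 0 \<Longrightarrow> set_integrable lborel {b..} (\<lambda>x. x powr mu * V x)"
    and conv: "\<And>x1 x x2. 0 < x1 \<Longrightarrow> x1 \<le> x \<Longrightarrow> x \<le> x2 \<Longrightarrow> V x1 > 0 \<Longrightarrow> V x2 > 0 \<Longrightarrow> V x > 0"
    and mu: "0 < mu1" "mu1 < mu2" "mu2 < mu3"
    and pos1: "(LINT x:{b..}|lborel. x powr mu1 * V x) > 0"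
    and pos3: "(LINT x:{b..}|lborel. x powr mu3 * V x) > 0"
  shows "(LINT x:{b..}|lborel. x powr mu2 * V x) > 0"
proof -
  have i1: "set_integrable lborel {b..} (\<lambda>x. x powr mu1 * V x)" using int mu by auto
  have i2: "set_integrable lborel {b..} (\<lambda>x. x powr mu2 * V x)" using int mu by auto
  have i3: "set_integrable lborel {b..} (\<lambda>x. x powr mu3 * V x)" using int mu by auto
  define P where "P = {x. x > 0 \<and> V x > 0}"
  have Pne: "P \<noteq> {}"
  proof
    assume "P = {}"
    then have Vn: "V x \<le> 0" if "x > 0" for x using that unfolding P_def by (metis (mono_tags) empty_iff mem_Collect_eq not_less)
    have "(LINT x:{b..}|lborel. x powr mu1 * V x) \<le> (LINT x:{b..}|lborel. 0)"
    proof (intro set_integral_mono i1)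
      show "set_integrable lborel {b..} (\<lambda>x. 0::real)" by (simp add: set_integrable_def)
      fix x :: real assume "x \<in> {b..}"
      show "x powr mu1 * V x \<le> 0"
        using Vn[of x] b \<open>x \<in> {b..}\<close> by (cases "x = 0") (auto intro: mult_nonneg_nonpos)
    qed
    then show False using pos1 by simp
  qed
  have Pbb: "bdd_below P" unfolding bdd_below_def P_def by (rule exI[of _ 0]) auto
  define p where "p = Inf P"
  have p0: "p \<ge> 0" unfolding p_def using Pne by (intro cInf_greatest) (auto simp: P_def)
  have pl: "p \<le> x" if "x \<in> P" for x unfolding p_def by (rule cInf_lower[OF that Pbb])
  have left: "V x \<le> 0" if "0 < x" "x < p" for x using pl[of x] that by (force simp: P_def)
  show ?thesis
  proof (cases "bdd_above P")
    case True
    define q where "q = Sup P"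
    have qu: "x \<le> q" if "x \<in> P" for x unfolding q_def by (rule cSup_upper[OF that True])
    have pq: "p \<le> q" using Pne pl qu by (meson all_not_in_conv order_trans)
    have right: "V x \<le> 0" if "x > q" for x using qu[of x] that pq p0 unfolding P_def by (metis (mono_tags) mem_Collect_eq not_less order.strict_trans2 order_le_less_trans)
    have mid: "V x > 0" if h: "p < x" "x < q" for x
    proof -
      obtain x1 where x1: "x1 \<in> P" "x1 < x" using h Pne unfolding p_def by (meson cInf_lessD)
      obtain x2 where x2: "x2 \<in> P" "x < x2" using h Pne unfolding q_def by (meson less_cSupE)
      show ?thesis using conv[of x1 x x2] x1 x2 by (auto simp: P_def)
    qed
    show ?thesis
    proof (cases "p = q")
      case True
      then have Vn: "V x \<le> 0" if "x > 0" "x \<noteq> p" for x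
        using that left right by (cases "x < p") auto
      have "(LINT x:{b..}|lborel. x powr mu1 * V x) \<le> (LINT x:{b..}|lborel. 0)"
      proof (intro set_integral_mono_AE i1)
        show "set_integrable lborel {b..} (\<lambda>x. 0::real)" by (simp add: set_integrable_def)
        show "AE x\<in>{b..} in lborel. x powr mu1 * V x \<le> 0"
          using AE_lborel_singleton[of p]
        proof eventually_elim
          case (elim x)
          show ?case
          proof
            assume "x \<in> {b..}"
            then show "x powr mu1 * V x \<le> 0"
              using Vn[of x] elim b by (cases "x = 0") (auto intro: mult_nonneg_nonpos)
          qed
        qed
      qed
      then show ?thesis using pos1 by simp
    next
      case False
      then have pq': "p < q" using pq by simp
      show ?thesis
      proof (cases "p = 0")
        case True
        have q0: "q > 0" using pq' True by simp
        show ?thesis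
        proof (rule ratio_step[OF q0 i3 i2 _ pos3])
          fix x :: real assume xb: "x \<ge> b"
          show "x powr mu3 * V x / q powr mu3 \<le> x powr mu2 * V x / q powr mu2"
          proof (cases "x = 0")
            case True then show ?thesis by simp
          next
            case False
            then have x0: "x > 0" using xb b by simp
            have e: "x powr m * V x / q powr m = (x/q) powr m * V x" for m
              using x0 q0 by (simp add: powr_divide)
            show ?thesis unfolding e
            proof (cases "x < q")
              case True
              then have "V x > 0" using mid[of x] x0 \<open>p = 0\<close> by simp
              moreover have "(x/q) powr mu3 \<le> (x/q) powr mu2"
                using True x0 q0 mu by (intro powr_mono') auto
              ultimately show "(x/q) powr mu3 * V x \<le> (x/q) powr mu2 * V x"
                by (intro mult_right_mono) auto
            next
              case False
              show "(x/q) powr mu3 * V x \<le> (x/q) powr mu2 * V x"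
              proof (cases "x = q")
                case True then show ?thesis using q0 by simp
              next
                case False
                then have xq: "x > q" using \<open>\<not> x < q\<close> by simp
                then have "V x \<le> 0" using right by simp
                moreover have "(x/q) powr mu2 \<le> (x/q) powr mu3"
                  using xq x0 q0 mu by (intro powr_mono) auto
                ultimately show ?thesis by (intro mult_right_mono_neg) auto
              qed
            qed
          qed
        qed
      next
        case False
        then have p0': "p > 0" using p0 by simp
        obtain al be where ab: "al > 0" "be > 0"
          and out: "\<And>t. t \<le> ln p \<or> ln q \<le> t \<Longrightarrow> exp (mu2*t) \<le> al * exp (mu1*t) + be * exp (mu3*t)"
          and ins: "\<And>t. ln p \<le> t \<Longrightarrow> t \<le> ln q \<Longrightarrow> al * exp (mu1*t) + be * exp (mu3*t) \<le> exp (mu2*t)"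
          using kernel_exists[of mu1 mu2 mu3 "ln p" "ln q"] mu pq' p0' by auto
        have pw: "al * (x powr mu1 * V x) + be * (x powr mu3 * V x) \<le> x powr mu2 * V x" if xb: "x \<in> {b..}" for x
        proof (cases "x = 0")
          case True then show ?thesis by simp
        next
          case False
          then have x0: "x > 0" using xb b by simp
          have ep: "exp (m * ln x) = x powr m" for m using x0 by (simp add: powr_def)
          show ?thesis
          proof (cases "V x > 0")
            case True
            then have "x \<in> P" using x0 by (simp add: P_def)
            then have "ln p \<le> ln x" "ln x \<le> ln q" using pl[of x] qu[of x] x0 p0' by auto
            then have "al * x powr mu1 + be * x powr mu3 \<le> x powr mu2"
              using ins[of "ln x"] by (simp add: ep)
            then have "V x * (al * x powr mu1 + be * x powr mu3) \<le> V x * x powr mu2"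
              using True by (intro mult_left_mono) auto
            then show ?thesis by (simp add: algebra_simps)
          next
            case False
            then have "x \<le> p \<or> q \<le> x" using mid[of x] by force
            then have "ln x \<le> ln p \<or> ln q \<le> ln x" using x0 p0' pq' by auto
            then have "x powr mu2 \<le> al * x powr mu1 + be * x powr mu3"
              using out[of "ln x"] by (simp add: ep)
            then have "V x * (al * x powr mu1 + be * x powr mu3) \<le> V x * x powr mu2"
              using False by (intro mult_left_mono_neg) auto
            then show ?thesis by (simp add: algebra_simps)
          qed
        qed
        have "al * (LINT x:{b..}|lborel. x powr mu1 * V x) + be * (LINT x:{b..}|lborel. x powr mu3 * V x)
              = (LINT x:{b..}|lborel. al * (x powr mu1 * V x) + be * (x powr mu3 * V x))"
          using i1 i3 by (simp add: set_integral_add set_integrable_mult_right)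
        also have "\<dots> \<le> (LINT x:{b..}|lborel. x powr mu2 * V x)"
          using i1 i2 i3 pw by (intro set_integral_mono set_integral_add set_integrable_mult_right) auto
        finally have "al * (LINT x:{b..}|lborel. x powr mu1 * V x) + be * (LINT x:{b..}|lborel. x powr mu3 * V x)
              \<le> (LINT x:{b..}|lborel. x powr mu2 * V x)" .
        moreover have "al * (LINT x:{b..}|lborel. x powr mu1 * V x) + be * (LINT x:{b..}|lborel. x powr mu3 * V x) > 0"
          using ab pos1 pos3 by (intro add_pos_pos mult_pos_pos)
        ultimately show ?thesis by simp
      qed
    qed
  next
    case False
    have allr: "V x > 0" if h: "p < x" for x
    proof -
      obtain x1 where x1: "x1 \<in> P" "x1 < x" using h Pne unfolding p_def by (meson cInf_lessD)
      obtain x2 where x2: "x2 \<in> P" "x < x2" using False by (meson bdd_above_def not_le)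
      show ?thesis using conv[of x1 x x2] x1 x2 by (auto simp: P_def)
    qed
    show ?thesis
    proof (cases "p = 0")
      case True
      show ?thesis
      proof (rule set_integral_pos[OF i2])
        fix x :: real assume "x > b"
        then show "x powr mu2 * V x > 0" using allr[of x] True b by simp
      next
        fix x :: real assume xb: "x \<ge> b"
        show "x powr mu2 * V x \<ge> 0"
        proof (cases "x = 0")
          case False then show ?thesis using allr[of x] True b xb by simp
        qed simp
      qed
    next
      case False
      then have p0': "p > 0" using p0 by simp
      show ?thesis
      proof (rule ratio_step[OF p0' i1 i2 _ pos1])
        fix x :: real assume xb: "x \<ge> b"
        show "x powr mu1 * V x / p powr mu1 \<le> x powr mu2 * V x / p powr mu2"
        proof (cases "x = 0")
          case True then show ?thesis by simp
        next
          case False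
          then have x0: "x > 0" using xb b by simp
          have e: "x powr m * V x / p powr m = (x/p) powr m * V x" for m
            using x0 p0' by (simp add: powr_divide)
          show ?thesis unfolding e
          proof (cases "x < p")
            case True
            then have "V x \<le> 0" using left x0 by simp
            moreover have "(x/p) powr mu2 \<le> (x/p) powr mu1"
              using True x0 p0' mu by (intro powr_mono') auto
            ultimately show "(x/p) powr mu1 * V x \<le> (x/p) powr mu2 * V x"
              by (intro mult_right_mono_neg) auto
          next
            case False
            show "(x/p) powr mu1 * V x \<le> (x/p) powr mu2 * V x"
            proof (cases "x = p")
              case True then show ?thesis using p0' by simp
            next
              case False
              then have xp: "x > p" using \<open>\<not> x < p\<close> by simp
              then have "V x > 0" using allr by simp
              moreover have "(x/p) powr mu1 \<le> (x/p) powr mu2"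
                using xp x0 p0' mu by (intro powr_mono) auto
              ultimately show ?thesis by (intro mult_right_mono) auto
            qed
          qed
        qed
      qed
    qed
  qed
qed



lemma left_limit_bound:
  fixes f :: "real \<Rightarrow> real"
  assumes cont: "continuous_on {0<..} f" and "0 < x" "x < c"
    and h: "\<And>t. x < t \<Longrightarrow> t < c \<Longrightarrow> A \<le> f t"
  shows "A \<le> f c"
proof -
  have "isCont f c" using cont assms by (intro continuous_on_interior[of "{0<..}"]) (auto simp: interior_open)
  then have "(f \<longlongrightarrow> f c) (at_left c)"
    by (simp add: isCont_def filterlim_at_split)
  moreover have "eventually (\<lambda>t. A \<le> f t) (at_left c)"
    using eventually_at_left_real[OF \<open>x < c\<close>] by eventually_elim (use h in auto)
  ultimately show ?thesis by (intro tendsto_lowerbound) auto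
qed

lemma right_limit_bound:
  fixes f :: "real \<Rightarrow> real"
  assumes cont: "continuous_on {0<..} f" and "0 < c" "c < w"
    and h: "\<And>t. c < t \<Longrightarrow> t < w \<Longrightarrow> A \<le> f t"
  shows "A \<le> f c"
proof -
  have "isCont f c" using cont assms by (intro continuous_on_interior[of "{0<..}"]) (auto simp: interior_open)
  then have "(f \<longlongrightarrow> f c) (at_right c)"
    by (simp add: isCont_def filterlim_at_split)
  moreover have "eventually (\<lambda>t. A \<le> f t) (at_right c)"
    using eventually_at_right_real[OF \<open>c < w\<close>] by eventually_elim (use h in auto)
  ultimately show ?thesis by (intro tendsto_lowerbound) auto
qed

lemma qc_unimodal:
  fixes f :: "real \<Rightarrow> real"
  assumes cont: "continuous_on {0<..} f"
    and qc: "\<And>x y z. 0 < x \<Longrightarrow> x < y \<Longrightarrow> y < z \<Longrightarrow> min (f x) (f z) \<le> f y"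
  shows "unimodal_on {0<..} f"
proof -
  define D where "D = {z. z > 0 \<and> (\<exists>y. 0 < y \<and> y < z \<and> f y > f z)}"
  have anti: "f w' \<le> f w" if h: "z \<in> D" "z \<le> w" "w < w'" for z w w'
  proof -
    obtain y where y: "0 < y" "y < z" "f y > f z" using h(1) by (auto simp: D_def)
    have fzw: "f w \<le> f z"
    proof (cases "w = z")
      case False
      then have "z < w" using h by simp
      then have "min (f y) (f w) \<le> f z" using qc[of y z w] y by simp
      then show ?thesis using y by (simp add: min_def split: if_splits)
    qed simp
    have "min (f y) (f w') \<le> f w" using qc[of y w w'] y h by simp
    then show ?thesis using fzw y by (simp add: min_def split: if_splits)
  qed
  have upD: "w \<in> D" if h: "z \<in> D" "z < w" for z w
  proof -
    obtain y where y: "0 < y" "y < z" "f y > f z" using h(1) by (auto simp: D_def)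
    have "f w \<le> f z" using anti[OF h(1), of z w] h by simp
    then show ?thesis using y h unfolding D_def by auto
  qed
  show ?thesis
  proof (cases "D = {}")
    case True
    have "mono_on ({0<..} \<inter> {0..}) f"
    proof (rule mono_onI)
      fix r s :: real assume "r \<in> {0<..} \<inter> {0..}" "s \<in> {0<..} \<inter> {0..}" "r \<le> s"
      note h = this
      have "s \<notin> D" using True by simp
      then have "\<not> (f r > f s)" if "r < s" using that h unfolding D_def by auto
      then show "f r \<le> f s" using h by (cases "r = s") auto
    qed
    moreover have "antimono_on ({0<..} \<inter> {..0}) f" by (auto intro: monotone_onI)
    ultimately show ?thesis unfolding unimodal_on_def by blast
  next
    case False
    have bb: "bdd_below D" unfolding bdd_below_def D_def by (rule exI[of _ 0]) auto
    define c where "c = Inf D"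
    have c0: "c \<ge> 0" unfolding c_def using False by (intro cInf_greatest) (auto simp: D_def)
    have notD: "z \<notin> D" if "z < c" for z using cInf_lower[OF _ bb, of z] that by (auto simp: c_def)
    have inc: "f x \<le> f x'" if h: "0 < x" "x < x'" "x' \<notin> D" for x x'
    proof (rule ccontr)
      assume "\<not> f x \<le> f x'"
      then have "x' \<in> D" using h unfolding D_def by auto
      then show False using h by simp
    qed
    have "mono_on ({0<..} \<inter> {..c}) f"
    proof (rule mono_onI)
      fix r s :: real assume rs: "r \<in> {0<..} \<inter> {..c}" "s \<in> {0<..} \<inter> {..c}" "r \<le> s"
      show "f r \<le> f s"
      proof (cases "r = s")
        case False
        then have rs': "r < s" using rs by simp
        show ?thesis
        proof (cases "s < c")
          case True then show ?thesis using inc[of r s] notD[of s] rs rs' by auto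
        next
          case False
          then have sc: "s = c" using rs by simp
          show ?thesis unfolding sc
          proof (rule left_limit_bound[OF cont])
            show "0 < r" "r < c" using rs rs' sc by auto
            fix t assume "r < t" "t < c"
            then show "f r \<le> f t" using inc[of r t] notD[of t] rs by auto
          qed
        qed
      qed simp
    qed
    moreover have "antimono_on ({0<..} \<inter> {c..}) f"
    proof (rule monotone_onI)
      fix r s :: real assume rs: "r \<in> {0<..} \<inter> {c..}" "s \<in> {0<..} \<inter> {c..}" "r \<le> s"
      have gen: "f s \<le> f t" if h: "c < t" "t < s" for t
      proof -
        obtain z where "z \<in> D" "z < t" using h False unfolding c_def by (meson cInf_lessD)
        then show ?thesis using anti[of z t s] h by simp
      qed
      show "f s \<le> f r"
      proof (cases "r = s")
        case False
        then have rs': "r < s" using rs by simp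
        show ?thesis
        proof (cases "c < r")
          case True then show ?thesis using gen[of r] rs' by simp
        next
          case False
          then have rc: "r = c" using rs by simp
          show ?thesis unfolding rc
          proof (rule right_limit_bound[OF cont])
            show "0 < c" "c < s" using rs rs' rc by auto
            fix t assume "c < t" "t < s"
            then show "f s \<le> f t" using gen by simp
          qed
        qed
      qed simp
    qed
    ultimately show ?thesis unfolding unimodal_on_def by blast
  qed
qed



lemma bc_Suc:
  assumes "a > 0" "nu > -1"
  shows "bc a nu (Suc k) = bc a nu k * ((a/2)^2 / ((real k + 1) * (real k + nu + 1)))"
proof -
  have p: "(a/2) powr (2 * real (Suc k) + nu) = (a/2) powr (2 * real k + nu) * (a/2)^2"
  proof -
    have "(a/2) powr (2 * real (Suc k) + nu) = (a/2) powr ((2 * real k + nu) + 2)" by (simp add: algebra_simps)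
    also have "\<dots> = (a/2) powr (2 * real k + nu) * (a/2) powr 2" by (rule powr_add)
    also have "(a/2) powr (2::real) = (a/2)^2" using assms by (simp add: powr_numeral)
    finally show ?thesis .
  qed
  have nz: "real k + nu + 1 \<notin> \<int>\<^sub>\<le>\<^sub>0" using assms by (auto elim!: nonpos_Ints_cases)
  have g: "Gamma (real (Suc k) + nu + 1) = (real k + nu + 1) * Gamma (real k + nu + 1)"
    using Gamma_plus1[OF nz] by (simp add: algebra_simps)
  have gp: "Gamma (real k + nu + 1) > 0" using assms by simp
  have kp: "real k + nu + 1 > 0" using assms by simp
  show ?thesis unfolding bc_def p g using gp kp
    by (simp add: field_simps)
qed

lemma chain_up:
  fixes u :: "nat \<Rightarrow> real"
  assumes "\<And>t. i \<le> t \<Longrightarrow> t < j \<Longrightarrow> u t \<le> u (Suc t)" "i \<le> j"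
  shows "u i \<le> u j"
  using assms
proof (induction j)
  case (Suc j)
  show ?case
  proof (cases "i = Suc j")
    case False
    then have "i \<le> j" using Suc.prems by simp
    then have "u i \<le> u j" using Suc.IH Suc.prems by simp
    also have "u j \<le> u (Suc j)" using Suc.prems \<open>i \<le> j\<close> by simp
    finally show ?thesis .
  qed simp
qed simp

lemma chain_down:
  fixes u :: "nat \<Rightarrow> real"
  assumes "\<And>t. i \<le> t \<Longrightarrow> t < j \<Longrightarrow> u (Suc t) \<le> u t" "i \<le> j"
  shows "u j \<le> u i"
  using chain_up[of i j "\<lambda>t. - u t"] assms by simp

lemma seq_qc:
  fixes u rho :: "nat \<Rightarrow> real"
  assumes pos: "\<And>m. l \<le> m \<Longrightarrow> u m > 0"
    and step: "\<And>m. l \<le> m \<Longrightarrow> u (Suc m) = u m * rho m"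
    and dec: "\<And>m m'. l \<le> m \<Longrightarrow> m \<le> m' \<Longrightarrow> rho m' \<le> rho m"
    and ijk: "l \<le> i" "i \<le> j" "j \<le> k"
  shows "min (u i) (u k) \<le> u j"
proof (cases "i = j")
  case False
  then obtain j0 where j0: "j = Suc j0" "i \<le> j0" using ijk by (cases j) auto
  show ?thesis
  proof (cases "rho j0 \<ge> 1")
    case True
    have "u i \<le> u j"
    proof (rule chain_up)
      fix t assume t: "i \<le> t" "t < j"
      then have "rho t \<ge> 1" using dec[of t j0] True j0 ijk by simp
      then have "u t * 1 \<le> u t * rho t" using pos[of t] t ijk by (intro mult_left_mono) auto
      then show "u t \<le> u (Suc t)" using step[of t] t ijk by simp
    qed (use ijk in simp)
    then show ?thesis by simp
  next
    case False
    have "u k \<le> u j"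
    proof (rule chain_down)
      fix t assume t: "j \<le> t" "t < k"
      then have "rho t < 1" using dec[of j0 t] False j0 ijk by simp
      then have "u t * rho t \<le> u t * 1" using pos[of t] t ijk by (intro mult_left_mono) auto
      then show "u (Suc t) \<le> u t" using step[of t] t ijk by simp
    qed (use ijk in simp)
    then show ?thesis by simp
  qed
qed simp

lemma rho_dec:
  fixes nu :: real and l :: nat and C :: real
  assumes "nu > -1" "l > 0" "C \<ge> 0" "l \<le> m" "m \<le> m'"
  shows "C * ((real m' + 1) * (real m' + nu + 1) / ((real m' + 1 - real l) * (real m' + 1 + real l + nu)))
       \<le> C * ((real m + 1) * (real m + nu + 1) / ((real m + 1 - real l) * (real m + 1 + real l + nu)))"
proof -
  define L where "L = real l * (real l + nu)"
  have L: "L > 0" using assms by (simp add: L_def)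
  define P where "P = (\<lambda>n::real. n * (n + nu))"
  have h: "(n * (n + nu)) / ((n - real l) * (n + real l + nu)) = 1 + L / (P n - L)" if "n \<ge> real l + 1" for n
  proof -
    have d: "(n - real l) * (n + real l + nu) = P n - L" by (simp add: P_def L_def algebra_simps)
    have "P n - L > 0" using that assms unfolding d[symmetric] by (intro mult_pos_pos) auto
    then show ?thesis unfolding d by (simp add: field_simps P_def)
  qed
  have n1: "real m + 1 \<ge> real l + 1" "real m' + 1 \<ge> real l + 1" using assms by auto
  have Pm: "P (real m + 1) - L > 0"
  proof -
    have "(real m + 1 - real l) * (real m + 1 + real l + nu) > 0" using assms by (intro mult_pos_pos) auto
    then show ?thesis by (simp add: P_def L_def algebra_simps)
  qed
  have Pmono: "P (real m + 1) \<le> P (real m' + 1)"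
  proof -
    have "P (real m' + 1) - P (real m + 1) = (real m' - real m) * (real m' + real m + 2 + nu)"
      by (simp add: P_def algebra_simps)
    also have "\<dots> \<ge> 0" using assms by (intro mult_nonneg_nonneg) auto
    finally show ?thesis by simp
  qed
  have "L / (P (real m' + 1) - L) \<le> L / (P (real m + 1) - L)"
    using L Pm Pmono by (intro divide_left_mono) auto
  then have "(real m' + 1) * (real m' + nu + 1) / ((real m' + 1 - real l) * (real m' + 1 + real l + nu))
       \<le> (real m + 1) * (real m + nu + 1) / ((real m + 1 - real l) * (real m + 1 + real l + nu))"
    using h[OF n1(1)] h[OF n1(2)] by (simp add: algebra_simps)
  then show ?thesis using assms(3) by (intro mult_left_mono) auto
qed

definition wseq :: "real \<Rightarrow> real \<Rightarrow> real \<Rightarrow> real \<Rightarrow> nat \<Rightarrow> real \<Rightarrow> nat \<Rightarrow> real" where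
  "wseq a1 a2 nu1 nu2 l lam m =
     exp (- (a1\<^sup>2) / 2) * (if l \<le> m then bc a1 nu1 (m - l) else 0) - lam * (exp (- (a2\<^sup>2) / 2) * bc a2 nu2 m)"

lemma w_conv:
  assumes a: "a1 > 0" "a2 > 0" and nu: "nu2 > -1" "nu1 = nu2 + 2 * real l" and l: "l > 0"
    and lam: "lam > 0" and ijk: "i \<le> j" "j \<le> k"
    and wi: "wseq a1 a2 nu1 nu2 l lam i > 0" and wk: "wseq a1 a2 nu1 nu2 l lam k > 0"
  shows "wseq a1 a2 nu1 nu2 l lam j > 0"
proof -
  define E1 where "E1 = exp (- (a1\<^sup>2) / 2)"
  define E2 where "E2 = exp (- (a2\<^sup>2) / 2)"
  have E: "E1 > 0" "E2 > 0" by (simp_all add: E1_def E2_def)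
  have wdef: "wseq a1 a2 nu1 nu2 l lam m = E1 * (if l \<le> m then bc a1 nu1 (m - l) else 0) - lam * (E2 * bc a2 nu2 m)" for m
    by (simp add: wseq_def E1_def E2_def)
  have nu1: "nu1 > -1" using nu by simp
  have b1: "bc a1 nu1 k > 0" for k using bc_pos[OF a(1) nu1] .
  have b2: "bc a2 nu2 k > 0" for k using bc_pos[OF a(2) nu(1)] .
  have neg: "wseq a1 a2 nu1 nu2 l lam m < 0" if "m < l" for m
    using that lam E b2[of m] by (simp add: wdef)
  have il: "l \<le> i" using wi neg[of i] by (cases "l \<le> i") auto
  have kl: "l \<le> k" using wk neg[of k] by (cases "l \<le> k") auto
  define u where "u = (\<lambda>m. E1 * bc a1 nu1 (m - l) / (E2 * bc a2 nu2 m))"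
  have upos: "u m > 0" for m using E b1 b2 by (simp add: u_def)
  have wu: "wseq a1 a2 nu1 nu2 l lam m = E2 * bc a2 nu2 m * (u m - lam)" if "l \<le> m" for m
    using that E b2[of m] by (simp add: wdef u_def field_simps)
  have wpos_iff: "wseq a1 a2 nu1 nu2 l lam m > 0 \<longleftrightarrow> u m > lam" if "l \<le> m" for m
  proof -
    have c: "E2 * bc a2 nu2 m > 0" using E b2[of m] by simp
    show ?thesis unfolding wu[OF that] using mult_less_cancel_left_pos[OF c, of 0 "u m - lam"] by simp
  qed
  define C where "C = (a1/2)^2 / (a2/2)^2"
  have C: "C \<ge> 0" by (simp add: C_def)
  define rho where "rho = (\<lambda>m::nat. C * ((real m + 1) * (real m + nu2 + 1) / ((real m + 1 - real l) * (real m + 1 + real l + nu2))))"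
  have step: "u (Suc m) = u m * rho m" if "l \<le> m" for m
  proof -
    have s: "Suc m - l = Suc (m - l)" using that by simp
    have r: "real (m - l) = real m - real l" using that by simp
    have p1: "real m - real l + 1 > 0" using that by simp
    have p2: "real m - real l + nu1 + 1 > 0" using that nu by simp
    have p3: "real m + 1 > 0" "real m + nu2 + 1 > 0" using nu by auto
    have "u (Suc m) = E1 * (bc a1 nu1 (m - l) * ((a1/2)^2 / ((real m - real l + 1) * (real m - real l + nu1 + 1))))
            / (E2 * (bc a2 nu2 m * ((a2/2)^2 / ((real m + 1) * (real m + nu2 + 1)))))"
      unfolding u_def s bc_Suc[OF a(1) nu1] bc_Suc[OF a(2) nu(1)] r by simp
    also have "\<dots> = u m * (((a1/2)^2 / ((real m - real l + 1) * (real m - real l + nu1 + 1)))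
                    / ((a2/2)^2 / ((real m + 1) * (real m + nu2 + 1))))"
      using E b1 b2 a by (simp add: u_def field_simps)
    also have "((a1/2)^2 / ((real m - real l + 1) * (real m - real l + nu1 + 1)))
                    / ((a2/2)^2 / ((real m + 1) * (real m + nu2 + 1))) = rho m"
    proof -
      have e: "real m - real l + (nu2 + 2 * real l) + 1 = real m + 1 + real l + nu2" by simp
      have e2: "real m - real l + 1 = real m + 1 - real l" by simp
      have g: "(A/d1)/(B/d2) = (A/B)*(d2/d1)" for A B d1 d2 :: real
        by (cases "B = 0"; cases "d1 = 0"; cases "d2 = 0") (simp_all add: field_simps)
      show ?thesis unfolding rho_def C_def nu(2) g e e2 by simp
    qed
    finally show ?thesis .
  qed
  have dec: "rho m' \<le> rho m" if "l \<le> m" "m \<le> m'" for m m'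
    unfolding rho_def using rho_dec[OF nu(1) l C that] .
  have "min (u i) (u k) \<le> u j"
    by (rule seq_qc[where u=u and rho=rho and l=l]) (use upos step dec il ijk in auto)
  moreover have "u i > lam" "u k > lam" using wpos_iff[OF il] wpos_iff[OF kl] wi wk by auto
  ultimately have "u j > lam" by linarith
  then show ?thesis using wpos_iff[of j] il ijk by simp
qed



definition Vf :: "real \<Rightarrow> real \<Rightarrow> real \<Rightarrow> real \<Rightarrow> real \<Rightarrow> real \<Rightarrow> real" where
  "Vf a1 a2 nu1 nu2 lam x = exp (- (x\<^sup>2 + a1\<^sup>2) / 2) * bessel_I nu1 (a1 * x)
      - lam * (exp (- (x\<^sup>2 + a2\<^sup>2) / 2) * bessel_I nu2 (a2 * x))"

lemma w_sums:
  assumes a: "a1 > 0" "a2 > 0" and nu: "nu2 > -1" "nu1 = nu2 + 2 * real l" and y: "y \<ge> 0"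
  shows "(\<lambda>m. wseq a1 a2 nu1 nu2 l lam m * y^m) sums
           (exp (- (a1\<^sup>2) / 2) * (y^l * bS a1 nu1 y) - lam * (exp (- (a2\<^sup>2) / 2) * bS a2 nu2 y))"
proof -
  have nu1: "nu1 > -1" using nu by simp
  define g where "g = (\<lambda>m. (if l \<le> m then bc a1 nu1 (m - l) else 0) * y^m)"
  have "(\<lambda>k. bc a1 nu1 k * y^k) sums bS a1 nu1 y"
    unfolding bS_def using bc_summable[OF a(1) nu1 y] by (rule summable_sums)
  then have "(\<lambda>k. y^l * (bc a1 nu1 k * y^k)) sums (y^l * bS a1 nu1 y)" by (rule sums_mult)
  moreover have "(\<lambda>k. g (k + l)) = (\<lambda>k. y^l * (bc a1 nu1 k * y^k))"
    by (rule ext) (simp add: g_def power_add mult_ac)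
  ultimately have "(\<lambda>k. g (k + l)) sums (y^l * bS a1 nu1 y)" by simp
  moreover have "(\<Sum>i<l. g i) = 0" by (simp add: g_def)
  ultimately have G: "g sums (y^l * bS a1 nu1 y)" using sums_iff_shift[of g l] by simp
  have H: "(\<lambda>k. bc a2 nu2 k * y^k) sums bS a2 nu2 y"
    unfolding bS_def using bc_summable[OF a(2) nu(1) y] by (rule summable_sums)
  have "(\<lambda>m. exp (- (a1\<^sup>2) / 2) * g m - lam * (exp (- (a2\<^sup>2) / 2) * (bc a2 nu2 m * y^m))) sums
           (exp (- (a1\<^sup>2) / 2) * (y^l * bS a1 nu1 y) - lam * (exp (- (a2\<^sup>2) / 2) * bS a2 nu2 y))"
    by (intro sums_diff sums_mult G H)
  moreover have "(\<lambda>m. exp (- (a1\<^sup>2) / 2) * g m - lam * (exp (- (a2\<^sup>2) / 2) * (bc a2 nu2 m * y^m)))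
       = (\<lambda>m. wseq a1 a2 nu1 nu2 l lam m * y^m)"
    by (rule ext) (simp add: g_def wseq_def algebra_simps)
  ultimately show ?thesis by simp
qed

lemma V_repr:
  assumes a: "a1 > 0" "a2 > 0" and nu: "nu2 > -1" "nu1 = nu2 + 2 * real l" and x: "x > 0"
  shows "Vf a1 a2 nu1 nu2 lam x = x powr nu2 * exp (- (x\<^sup>2) / 2) * (\<Sum>m. wseq a1 a2 nu1 nu2 l lam m * (x\<^sup>2)^m)"
proof -
  have nu1: "nu1 > -1" using nu by simp
  have s: "(\<Sum>m. wseq a1 a2 nu1 nu2 l lam m * (x\<^sup>2)^m) =
      exp (- (a1\<^sup>2) / 2) * ((x\<^sup>2)^l * bS a1 nu1 (x\<^sup>2)) - lam * (exp (- (a2\<^sup>2) / 2) * bS a2 nu2 (x\<^sup>2))"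
    using w_sums[OF a nu, of "x\<^sup>2" lam] by (simp add: sums_iff)
  have p: "x powr nu1 = x powr nu2 * (x\<^sup>2)^l"
  proof -
    have "x powr nu1 = x powr nu2 * x powr (real (2*l))" unfolding nu(2) by (simp add: powr_add)
    also have "x powr (real (2*l)) = (x\<^sup>2)^l" using x by (subst powr_realpow) (auto simp: power_mult)
    finally show ?thesis .
  qed
  have e: "exp (- (x\<^sup>2 + a\<^sup>2) / 2) = exp (- (x\<^sup>2) / 2) * exp (- (a\<^sup>2) / 2)" for a :: real
    by (simp add: exp_add[symmetric] field_simps)
  show ?thesis unfolding Vf_def s bessel_eq[OF a(1) x nu1] bessel_eq[OF a(2) x nu(1)] e p
    by (simp add: algebra_simps)
qed

lemma V_conv:
  assumes a: "a1 > 0" "a2 > 0" and nu: "nu2 > -1" "nu1 = nu2 + 2 * real l" and l: "l > 0" and lam: "lam > 0"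
    and x: "0 < x1" "x1 \<le> x" "x \<le> x2"
    and v: "Vf a1 a2 nu1 nu2 lam x1 > 0" "Vf a1 a2 nu1 nu2 lam x2 > 0"
  shows "Vf a1 a2 nu1 nu2 lam x > 0"
proof (cases "x = x1 \<or> x = x2")
  case True then show ?thesis using v by auto
next
  case False
  then have xs: "x1 < x" "x < x2" using x by auto
  define W where "W = (\<lambda>y. \<Sum>m. wseq a1 a2 nu1 nu2 l lam m * y^m)"
  have Vpos: "Vf a1 a2 nu1 nu2 lam z > 0 \<longleftrightarrow> W (z\<^sup>2) > 0" if "z > 0" for z
  proof -
    have "Vf a1 a2 nu1 nu2 lam z = (z powr nu2 * exp (- (z\<^sup>2) / 2)) * W (z\<^sup>2)"
      unfolding W_def using V_repr[OF a nu that] by simp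
    moreover have c: "z powr nu2 * exp (- (z\<^sup>2) / 2) > 0" using that by simp
    ultimately show ?thesis using mult_less_cancel_left_pos[OF c, of 0 "W (z\<^sup>2)"] by simp
  qed
  have "W (x\<^sup>2) > 0" unfolding W_def
  proof (rule discrete_qc)
    show "summable (\<lambda>m. wseq a1 a2 nu1 nu2 l lam m * y^m)" if "y > 0" for y
      using w_sums[OF a nu, of y lam] that sums_summable by auto
    show "wseq a1 a2 nu1 nu2 l lam j > 0" if "i \<le> j" "j \<le> k" "wseq a1 a2 nu1 nu2 l lam i > 0"
       "wseq a1 a2 nu1 nu2 l lam k > 0" for i j k
      using w_conv[OF a nu l lam that] .
    show "0 < x1\<^sup>2" "x1\<^sup>2 < x\<^sup>2" "x\<^sup>2 < x2\<^sup>2" using x xs by (auto intro: power_strict_mono)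
    show "(\<Sum>m. wseq a1 a2 nu1 nu2 l lam m * (x1\<^sup>2)^m) > 0" using Vpos[of x1] v x unfolding W_def by simp
    show "(\<Sum>m. wseq a1 a2 nu1 nu2 l lam m * (x2\<^sup>2)^m) > 0" using Vpos[of x2] v x unfolding W_def by simp
  qed
  then show ?thesis using Vpos[of x] x xs by simp
qed



lemma Q_eq: "nuttall_Q mu nu a b = (LINT x:{b..}|lborel. nq mu nu a x)"
  by (simp add: nuttall_Q_def nq_def)

lemma Q_pos:
  assumes "a > 0" "nu > -1" "mu > 0" "b \<ge> 0"
  shows "nuttall_Q mu nu a b > 0"
  unfolding Q_eq
proof (rule set_integral_pos[OF nq_integrable[OF assms]])
  fix x assume "x > b" then show "nq mu nu a x > 0" using nq_pos[OF assms(1,2)] assms by simp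
next
  fix x assume "x \<ge> b" then show "nq mu nu a x \<ge> 0" using nq_nonneg[OF assms(1,2)] assms by simp
qed

lemma nq_convex_pt:
  assumes "a > 0" "nu > -1" "z \<ge> 0" "0 < t" "t < 1" "x > 0" "y > 0"
  shows "nq ((1 - t) * x + t * y) nu a z \<le> (1 - t) * nq x nu a z + t * nq y nu a z"
proof (cases "z = 0")
  case True
  have "(1 - t) * x + t * y > 0" using assms by (intro add_pos_pos mult_pos_pos) auto
  then show ?thesis using True assms by (simp add: nq_def)
next
  case False
  then have z: "z > 0" using assms by simp
  define K where "K = exp (- (z\<^sup>2 + a\<^sup>2) / 2) * bessel_I nu (a * z)"
  have K: "K \<ge> 0" unfolding K_def using bessel_eq[OF assms(1) z assms(2)] bS_pos[OF assms(1,2), of "z^2"] z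
    by simp
  have nqK: "nq m nu a z = z powr m * K" for m by (simp add: nq_def K_def mult_ac)
  have pe: "z powr m = exp (ln z * m)" for m using z by (simp add: powr_def mult.commute)
  have "z powr ((1 - t) * x + t * y) \<le> (1 - t) * z powr x + t * z powr y"
    unfolding pe using exp_lin_convex[of t "ln z" x y] assms by simp
  then have "z powr ((1 - t) * x + t * y) * K \<le> ((1 - t) * z powr x + t * z powr y) * K"
    using K by (intro mult_right_mono) auto
  then show ?thesis unfolding nqK by (simp add: algebra_simps)
qed

lemma Q_convex:
  assumes "a > 0" "nu > -1" "b \<ge> 0"
  shows "convex_on {0<..} (\<lambda>mu. nuttall_Q mu nu a b)"
proof (rule convex_onI)
  fix t x y :: real assume t: "0 < t" "t < 1" and xy: "x \<in> {0<..}" "y \<in> {0<..}"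
  have m: "(1 - t) * x + t * y > 0" using t xy by (intro add_pos_pos mult_pos_pos) auto
  have ix: "set_integrable lborel {b..} (nq x nu a)" using nq_integrable assms xy by simp
  have iy: "set_integrable lborel {b..} (nq y nu a)" using nq_integrable assms xy by simp
  have im: "set_integrable lborel {b..} (nq ((1 - t) * x + t * y) nu a)" using nq_integrable assms m by simp
  have "(LINT z:{b..}|lborel. nq ((1 - t) * x + t * y) nu a z)
      \<le> (LINT z:{b..}|lborel. (1 - t) * nq x nu a z + t * nq y nu a z)"
    using ix iy im nq_convex_pt[OF assms(1,2) _ t] xy assms
    by (intro set_integral_mono set_integral_add set_integrable_mult_right) auto
  also have "\<dots> = (1 - t) * (LINT z:{b..}|lborel. nq x nu a z) + t * (LINT z:{b..}|lborel. nq y nu a z)"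
    using ix iy by (simp add: set_integral_add set_integrable_mult_right)
  finally show "nuttall_Q ((1 - t) *\<^sub>R x + t *\<^sub>R y) nu a b \<le> (1 - t) * nuttall_Q x nu a b + t * nuttall_Q y nu a b"
    by (simp add: Q_eq)
qed (rule convex_real_interval)

lemma Q_cont:
  assumes "a > 0" "nu > -1" "b \<ge> 0"
  shows "continuous_on {0<..} (\<lambda>mu. nuttall_Q mu nu a b)"
  by (rule convex_on_continuous[OF open_greaterThan Q_convex[OF assms]])

theorem theorem6:
  fixes b nu1 nu2 a1 a2 :: real and l :: nat
  assumes "b \<ge> 0" and "nu1 > -1" and "nu2 > -1"
    and "l > 0" and "nu1 - nu2 = 2 * real l"
    and "0 < a1" and "a1 \<le> a2"
  shows "unimodal_on {0<..} (\<lambda>mu. nuttall_Q mu nu1 a1 b / nuttall_Q mu nu2 a2 b)"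
proof (rule qc_unimodal)
  have a2: "a2 > 0" using assms by simp
  have nu1e: "nu1 = nu2 + 2 * real l" using assms by simp
  define F where "F = (\<lambda>mu. nuttall_Q mu nu1 a1 b)"
  define G where "G = (\<lambda>mu. nuttall_Q mu nu2 a2 b)"
  have Gpos: "G mu > 0" if "mu > 0" for mu unfolding G_def using Q_pos[OF a2 assms(3) that assms(1)] .
  have Fpos: "F mu > 0" if "mu > 0" for mu unfolding F_def using Q_pos[OF assms(6) assms(2) that assms(1)] .
  show "continuous_on {0<..} (\<lambda>mu. nuttall_Q mu nu1 a1 b / nuttall_Q mu nu2 a2 b)"
    using Q_cont[OF assms(6) assms(2) assms(1)] Q_cont[OF a2 assms(3) assms(1)] Gpos
    by (intro continuous_on_divide) (auto simp: G_def, metis less_irrefl)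
  fix mu1 mu2 mu3 :: real assume mu: "0 < mu1" "mu1 < mu2" "mu2 < mu3"
  show "min (nuttall_Q mu1 nu1 a1 b / nuttall_Q mu1 nu2 a2 b) (nuttall_Q mu3 nu1 a1 b / nuttall_Q mu3 nu2 a2 b)
        \<le> nuttall_Q mu2 nu1 a1 b / nuttall_Q mu2 nu2 a2 b"
  proof (rule ccontr)
    assume "\<not> ?thesis"
    then have lt: "F mu2 / G mu2 < F mu1 / G mu1" "F mu2 / G mu2 < F mu3 / G mu3"
      by (auto simp: F_def G_def)
    define lam where "lam = F mu2 / G mu2"
    have lam: "lam > 0" unfolding lam_def using Fpos Gpos mu by simp
    define V where "V = Vf a1 a2 nu1 nu2 lam"
    have pt: "x powr m * V x = nq m nu1 a1 x - lam * nq m nu2 a2 x" for m x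
      by (simp add: V_def Vf_def nq_def algebra_simps)
    have intV: "set_integrable lborel {b..} (\<lambda>x. x powr m * V x)" if "m > 0" for m
      unfolding pt using nq_integrable[OF assms(6) assms(2) that assms(1)] nq_integrable[OF a2 assms(3) that assms(1)]
      by (intro set_integral_diff set_integrable_mult_right) auto
    have HV: "(LINT x:{b..}|lborel. x powr m * V x) = F m - lam * G m" if "m > 0" for m
      unfolding pt F_def G_def Q_eq
      using nq_integrable[OF assms(6) assms(2) that assms(1)] nq_integrable[OF a2 assms(3) that assms(1)]
      by (simp add: set_integral_diff set_integrable_mult_right)
    have H1: "F mu1 - lam * G mu1 > 0"
    proof -
      have "lam < F mu1 / G mu1" using lt by (simp add: lam_def)
      then have "lam * G mu1 < F mu1" using Gpos[of mu1] mu by (simp add: field_simps)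
      then show ?thesis by simp
    qed
    have H3: "F mu3 - lam * G mu3 > 0"
    proof -
      have "lam < F mu3 / G mu3" using lt by (simp add: lam_def)
      then have "lam * G mu3 < F mu3" using Gpos[of mu3] mu by (simp add: field_simps)
      then show ?thesis by simp
    qed
    have "(LINT x:{b..}|lborel. x powr mu2 * V x) > 0"
    proof (rule cont_qc[OF assms(1) intV _ mu])
      show "V x > 0" if "0 < x1" "x1 \<le> x" "x \<le> x2" "V x1 > 0" "V x2 > 0" for x1 x x2
        using V_conv[OF assms(6) a2 assms(3) nu1e assms(4) lam, of x1 x x2] that unfolding V_def by blast
      show "(LINT x:{b..}|lborel. x powr mu1 * V x) > 0" using HV[of mu1] H1 mu by simp
      show "(LINT x:{b..}|lborel. x powr mu3 * V x) > 0" using HV[of mu3] H3 mu by simp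
    qed
    then have "F mu2 - lam * G mu2 > 0" using HV[of mu2] mu by simp
    moreover have "F mu2 - lam * G mu2 = 0" using Gpos[of mu2] mu by (simp add: lam_def)
    ultimately show False by simp
  qed
qed

end
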